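(* Let $A, B, A', B'$ be countable sets, let $\mu_1 \in \mathcal{D}(A)$, $\mu_2 \in \mathcal{D}(B)$, and let $f \colon A \to \mathcal{D}(A')$, $g \colon B \to \mathcal{D}(B')$. Let $\Xi \subseteq A$ be a predicate, let $\Phi_1, \Phi_2 \subseteq A \times B$ and $\Psi \subseteq A' \times B'$ be relations, and assume $\Phi_1, \Phi_2$ are disjoint in the sense that for all $a, a' \in A$ and $b \in B$, if $a \in \Xi$ and $a' \notin \Xi$ then $(a,b) \notin \Phi_1$ or $(a',b) \notin \Phi_2$. Let $\varepsilon_1, \varepsilon_2, \varepsilon_1', \varepsilon_2', \delta_1, \delta_2, \delta_1', \delta_2' \geq 0$ be real numbers, and assume: (i) $\mu_1 \sim_{\varepsilon_1,\delta_1} \mu_2 : \Phi_1$; (ii) $\mu_1 \sim_{\varepsilon_2,\delta_2} \mu_2 : \Phi_2$; (iii) for all $a \in A$, $b \in B$ with $a \in \Xi$ and $(a,b) \in \Phi_1$, we have $f(a) \sim_{\varepsilon_1',\delta_1'} g(b) : \Psi$; (iv) for all $a \in A$, $b \in B$ with $a \notin \Xi$ and $(a,b) \in \Phi_2$, we have $f(a) \sim_{\varepsilon_2',\delta_2'} g(b) : \Psi$. Then $(\mu_1 \mathbin{>\!\!>\!\!=} f) \sim_{\varepsilon,\delta} (\mu_2 \mathbin{>\!\!>\!\!=} g) : \Psi$, where $\varepsilon = \max(\varepsilon_1 + \varepsilon_1', \varepsilon_2 + \varepsilon_2')$ and $\delta = \delta_1 + \delta_2 + \max(\delta_1', \delt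a_2')$.
   Context: For a countable set $A$, a (sub)distribution on $A$ is a function $\mu \colon A \to [0,1]$ with $\sum_{a \in A} \mu(a) \leq 1$; $\mathcal{D}(A)$ denotes the set of such. For $\mu \in \mathcal{D}(A)$ and $h \colon A \to \mathcal{D}(B)$, the bind is $(\mu \mathbin{>\!\!>\!\!=} h)(b) = \sum_{a \in A} \mu(a)\, h(a)(b)$. For a function $F \colon A \to [0,1]$, its expectation is $\mathbb{E}_\mu[F] = \sum_{a \in A} \mu(a) F(a)$. Approximate coupling: for countable $A, B$, a relation $\Phi \subseteq A \times B$, reals $\varepsilon, \delta \geq 0$, and $\mu_1 \in \mathcal{D}(A)$, $\mu_2 \in \mathcal{D}(B)$, we write $\mu_1 \sim_{\varepsilon,\delta} \mu_2 : \Phi$ (an $(\varepsilon,\delta)$-approximate $\Phi$-coupling exists) if for all functions $F \colon A \to [0,1]$ and $G \colon B \to [0,1]$ such that $F(a) \leq G(b)$ for all $(a,b) \in \Phi$, we have $\mathbb{E}_{\mu_1}[F] \leq e^{\varepsilon} \cdot \mathbb{E}_{\mu_2}[G] + \delta$. *)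

theory Defs
  imports "HOL-Probability.Probability"
begin

text \<open>Subdistributions on a countable set are modelled by sub-probability mass
  functions (type spmf); the value at a is spmf mu a, and bind is bind_spmf,
  whose mass function is exactly the sum of mu(a) * h(a)(b).\<close>

definition expect :: "'a spmf \<Rightarrow> ('a \<Rightarrow> real) \<Rightarrow> real" where
  "expect \<mu> F = (\<Sum>\<^sub>\<infinity>a. spmf \<mu> a * F a)"

definition approx_coupling ::
  "real \<Rightarrow> real \<Rightarrow> 'a spmf \<Rightarrow> 'b spmf \<Rightarrow> ('a \<times> 'b) set \<Rightarrow> bool" where
  "approx_coupling \<epsilon> \<delta> \<mu>1 \<mu>2 \<Phi> \<longleftrightarrow>
     (\<forall>F G. (\<forall>a. 0 \<le> F a \<and> F a \<le> 1) \<longrightarrow> (\<forall>b. 0 \<le> G b \<and> G b \<le> 1) \<longrightarrow>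
        (\<forall>a b. (a, b) \<in> \<Phi> \<longrightarrow> F a \<le> G b) \<longrightarrow>
        expect \<mu>1 F \<le> exp \<epsilon> * expect \<mu>2 G + \<delta>)"

end

theory Submission imports Defs begin

lemma meas_spmf[measurable]: "(f :: 'a \<Rightarrow> real) \<in> borel_measurable (measure_spmf p)"
  by simp

lemma int_spmf:
  fixes F :: "'a \<Rightarrow> real"
  assumes "\<And>x. \<bar>F x\<bar> \<le> B"
  shows "integrable (measure_spmf p) F"
  by (rule measure_spmf.integrable_const_bound[where B=B]) (use assms in auto)

lemma expect_integral:
  fixes F :: "'a \<Rightarrow> real"
  assumes "\<And>x. \<bar>F x\<bar> \<le> B"
  shows "expect p F = (\<integral>x. F x \<partial>measure_spmf p)"
proof -
  have I: "integrable (measure_spmf p) F" by (rule int_spmf[OF assms])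
  have "integrable (count_space UNIV) (\<lambda>x. spmf p x * F x)"
    using I by(simp add: integrable_iff_bounded nn_integral_measure_spmf abs_mult ennreal_mult'')
  then have "infsum (\<lambda>x. spmf p x * F x) UNIV = infsetsum (\<lambda>x. spmf p x * F x) UNIV"
    by (intro infsetsum_infsum[symmetric]) (simp add: Infinite_Set_Sum.abs_summable_on_def)
  also have "\<dots> = (\<integral>x. F x \<partial>measure_spmf p)"
    by (simp add: infsetsum_def integral_measure_spmf[OF I])
  finally show ?thesis by (simp add: expect_def)
qed

lemma integral_bind_spmf:
  fixes F :: "'b \<Rightarrow> real"
  assumes "\<And>x. \<bar>F x\<bar> \<le> B"
  shows "(\<integral>x. F x \<partial>measure_spmf (bind_spmf p f)) = (\<integral>a. (\<integral>x. F x \<partial>measure_spmf (f a)) \<partial>measure_spmf p)"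
  unfolding measure_spmf_bind
  apply (rule trans[OF integral_bind[where K="count_space UNIV" and B=B and B'=1]])
  using assms apply (auto intro: measure_spmf.subprob_emeasure_le_1)
  done

lemma integral_01:
  fixes F :: "'a \<Rightarrow> real"
  assumes "\<And>x. 0 \<le> F x \<and> F x \<le> 1"
  shows "0 \<le> (\<integral>x. F x \<partial>measure_spmf p) \<and> (\<integral>x. F x \<partial>measure_spmf p) \<le> 1"
proof
  show "0 \<le> (\<integral>x. F x \<partial>measure_spmf p)" using assms by (simp add: integral_nonneg)
  have "(\<integral>x. F x \<partial>measure_spmf p) \<le> (\<integral>x. 1 \<partial>measure_spmf p)"
    by (rule integral_mono) (use assms in \<open>auto intro: int_spmf[where B=1]\<close>)
  also have "\<dots> \<le> 1" by (simp add: measure_spmf.subprob_measure_le_1)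
  finally show "(\<integral>x. F x \<partial>measure_spmf p) \<le> 1" .
qed

lemma coup_int:
  fixes F :: "'a \<Rightarrow> real" and G :: "'b \<Rightarrow> real"
  assumes "approx_coupling \<epsilon> \<delta> \<mu>1 \<mu>2 \<Phi>"
    and "\<And>a. 0 \<le> F a \<and> F a \<le> 1" and "\<And>b. 0 \<le> G b \<and> G b \<le> 1"
    and "\<And>a b. (a, b) \<in> \<Phi> \<Longrightarrow> F a \<le> G b"
  shows "(\<integral>x. F x \<partial>measure_spmf \<mu>1) \<le> exp \<epsilon> * (\<integral>x. G x \<partial>measure_spmf \<mu>2) + \<delta>"
proof -
  have "expect \<mu>1 F \<le> exp \<epsilon> * expect \<mu>2 G + \<delta>"
    using assms unfolding approx_coupling_def by blast
  moreover have "expect \<mu>1 F = (\<integral>x. F x \<partial>measure_spmf \<mu>1)"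
    by (rule expect_integral[where B=1]) (use assms(2) in fastforce)
  moreover have "expect \<mu>2 G = (\<integral>x. G x \<partial>measure_spmf \<mu>2)"
    by (rule expect_integral[where B=1]) (use assms(3) in fastforce)
  ultimately show ?thesis by simp
qed

theorem theorem5p2:
  fixes \<mu>1 :: "'a::countable spmf" and \<mu>2 :: "'b::countable spmf"
    and f :: "'a \<Rightarrow> 'c::countable spmf" and g :: "'b \<Rightarrow> 'd::countable spmf"
    and \<Xi> :: "'a set" and \<Phi>1 \<Phi>2 :: "('a \<times> 'b) set" and \<Psi> :: "('c \<times> 'd) set"
    and \<epsilon>1 \<epsilon>2 \<epsilon>1' \<epsilon>2' \<delta>1 \<delta>2 \<delta>1' \<delta>2' :: real
  assumes disj: "\<And>a a' b. a \<in> \<Xi> \<Longrightarrow> a' \<notin> \<Xi> \<Longrightarrow> (a, b) \<notin> \<Phi>1 \<or> (a', b) \<notin> \<Phi>2"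
    and nonneg: "0 \<le> \<epsilon>1" "0 \<le> \<epsilon>2" "0 \<le> \<epsilon>1'" "0 \<le> \<epsilon>2'"
                "0 \<le> \<delta>1" "0 \<le> \<delta>2" "0 \<le> \<delta>1'" "0 \<le> \<delta>2'"
    and i: "approx_coupling \<epsilon>1 \<delta>1 \<mu>1 \<mu>2 \<Phi>1"
    and ii: "approx_coupling \<epsilon>2 \<delta>2 \<mu>1 \<mu>2 \<Phi>2"
    and iii: "\<And>a b. a \<in> \<Xi> \<Longrightarrow> (a, b) \<in> \<Phi>1 \<Longrightarrow> approx_coupling \<epsilon>1' \<delta>1' (f a) (g b) \<Psi>"
    and iv: "\<And>a b. a \<notin> \<Xi> \<Longrightarrow> (a, b) \<in> \<Phi>2 \<Longrightarrow> approx_coupling \<epsilon>2' \<delta>2' (f a) (g b) \<Psi>"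
  shows "approx_coupling (max (\<epsilon>1 + \<epsilon>1') (\<epsilon>2 + \<epsilon>2')) (\<delta>1 + \<delta>2 + max \<delta>1' \<delta>2')
           (bind_spmf \<mu>1 f) (bind_spmf \<mu>2 g) \<Psi>"
proof (unfold approx_coupling_def, intro allI impI)
  fix F :: "'c \<Rightarrow> real" and G :: "'d \<Rightarrow> real"
  assume F01: "\<forall>a. 0 \<le> F a \<and> F a \<le> 1" and G01: "\<forall>b. 0 \<le> G b \<and> G b \<le> 1"
    and FG: "\<forall>a b. (a, b) \<in> \<Psi> \<longrightarrow> F a \<le> G b"
  define F' where "F' a = (\<integral>x. F x \<partial>measure_spmf (f a))" for a
  define G' where "G' b = (\<integral>x. G x \<partial>measure_spmf (g b))" for b
  have F'01: "0 \<le> F' a \<and> F' a \<le> 1" for a unfolding F'_def by (rule integral_01) (use F01 in blast)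
  have G'01: "0 \<le> G' b \<and> G' b \<le> 1" for b unfolding G'_def by (rule integral_01) (use G01 in blast)
  have lhs: "expect (bind_spmf \<mu>1 f) F = (\<integral>a. F' a \<partial>measure_spmf \<mu>1)"
    unfolding F'_def
    by (subst expect_integral[where B=1], use F01 in force, rule integral_bind_spmf[where B=1]) (use F01 in force)
  have rhs: "expect (bind_spmf \<mu>2 g) G = (\<integral>a. G' a \<partial>measure_spmf \<mu>2)"
    unfolding G'_def
    by (subst expect_integral[where B=1], use G01 in force, rule integral_bind_spmf[where B=1]) (use G01 in force)
  define S1 where "S1 = {b. \<exists>a\<in>\<Xi>. (a, b) \<in> \<Phi>1}"
  define \<epsilon> where "\<epsilon> = max (\<epsilon>1 + \<epsilon>1') (\<epsilon>2 + \<epsilon>2')"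
  define \<delta>' where "\<delta>' = max \<delta>1' \<delta>2'"
  define F1 where "F1 a = (if a \<in> \<Xi> then max 0 (F' a - \<delta>1') else 0)" for a
  define F2 where "F2 a = (if a \<notin> \<Xi> then max 0 (F' a - \<delta>2') else 0)" for a
  define G1 where "G1 b = (if b \<in> S1 then min 1 (exp \<epsilon>1' * G' b) else 0)" for b
  define G2 where "G2 b = (if b \<notin> S1 then min 1 (exp \<epsilon>2' * G' b) else 0)" for b
  define H1 where "H1 b = (if b \<in> S1 then G' b else 0)" for b
  define H2 where "H2 b = (if b \<notin> S1 then G' b else 0)" for b
  have F101: "0 \<le> F1 a \<and> F1 a \<le> 1" for a using F'01[of a] nonneg by (auto simp: F1_def)
  have F201: "0 \<le> F2 a \<and> F2 a \<le> 1" for a using F'01[of a] nonneg by (auto simp: F2_def)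
  have G101: "0 \<le> G1 b \<and> G1 b \<le> 1" for b using G'01[of b] nonneg by (auto simp: G1_def)
  have G201: "0 \<le> G2 b \<and> G2 b \<le> 1" for b using G'01[of b] nonneg by (auto simp: G2_def)
  have H101: "0 \<le> H1 b \<and> H1 b \<le> 1" for b using G'01[of b] by (auto simp: H1_def)
  have H201: "0 \<le> H2 b \<and> H2 b \<le> 1" for b using G'01[of b] by (auto simp: H2_def)
  have c1: "(\<integral>a. F1 a \<partial>measure_spmf \<mu>1) \<le> exp \<epsilon>1 * (\<integral>b. G1 b \<partial>measure_spmf \<mu>2) + \<delta>1"
  proof (rule coup_int[OF i F101 G101])
    fix a b assume ab: "(a, b) \<in> \<Phi>1"
    show "F1 a \<le> G1 b"
    proof (cases "a \<in> \<Xi>")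
      case True
      then have b: "b \<in> S1" using ab by (auto simp: S1_def)
      have "F' a \<le> exp \<epsilon>1' * G' b + \<delta>1'"
        unfolding F'_def G'_def by (rule coup_int[OF iii[OF True ab]]) (use F01 G01 FG in auto)
      then show ?thesis using True b F'01[of a] G'01[of b] nonneg by (auto simp: F1_def G1_def)
    next
      case False
      then show ?thesis using G101[of b] by (simp add: F1_def)
    qed
  qed
  have c2: "(\<integral>a. F2 a \<partial>measure_spmf \<mu>1) \<le> exp \<epsilon>2 * (\<integral>b. G2 b \<partial>measure_spmf \<mu>2) + \<delta>2"
  proof (rule coup_int[OF ii F201 G201])
    fix a b assume ab: "(a, b) \<in> \<Phi>2"
    show "F2 a \<le> G2 b"
    proof (cases "a \<in> \<Xi>")
      case False
      then have b: "b \<notin> S1" using ab disj by (auto simp: S1_def)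
      have "F' a \<le> exp \<epsilon>2' * G' b + \<delta>2'"
        unfolding F'_def G'_def by (rule coup_int[OF iv[OF False ab]]) (use F01 G01 FG in auto)
      then show ?thesis using False b F'01[of a] G'01[of b] nonneg by (auto simp: F2_def G2_def)
    next
      case True
      then show ?thesis using G201[of b] by (simp add: F2_def)
    qed
  qed
  have iF1: "integrable (measure_spmf \<mu>1) F1" by (rule int_spmf[where B=1]) (use F101 in force)
  have iF2: "integrable (measure_spmf \<mu>1) F2" by (rule int_spmf[where B=1]) (use F201 in force)
  have iF': "integrable (measure_spmf \<mu>1) F'" by (rule int_spmf[where B=1]) (use F'01 in force)
  have iG1: "integrable (measure_spmf \<mu>2) G1" by (rule int_spmf[where B=1]) (use G101 in force)
  have iG2: "integrable (measure_spmf \<mu>2) G2" by (rule int_spmf[where B=1]) (use G201 in force)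
  have iH1: "integrable (measure_spmf \<mu>2) H1" by (rule int_spmf[where B=1]) (use H101 in force)
  have iH2: "integrable (measure_spmf \<mu>2) H2" by (rule int_spmf[where B=1]) (use H201 in force)
  have "(\<integral>a. F' a \<partial>measure_spmf \<mu>1) \<le> (\<integral>a. F1 a + F2 a + \<delta>' \<partial>measure_spmf \<mu>1)"
  proof (rule integral_mono)
    show "integrable (measure_spmf \<mu>1) (\<lambda>a. F1 a + F2 a + \<delta>')" using iF1 iF2 by simp
    fix a show "F' a \<le> F1 a + F2 a + \<delta>'"
      using F'01[of a] nonneg by (auto simp: F1_def F2_def \<delta>'_def)
  qed (rule iF')
  also have "\<dots> = (\<integral>a. F1 a \<partial>measure_spmf \<mu>1) + (\<integral>a. F2 a \<partial>measure_spmf \<mu>1) + \<delta>' * weight_spmf \<mu>1"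
    using iF1 iF2 by (simp add: weight_spmf_def)
  also have "\<dots> \<le> (\<integral>a. F1 a \<partial>measure_spmf \<mu>1) + (\<integral>a. F2 a \<partial>measure_spmf \<mu>1) + \<delta>'"
    using weight_spmf_le_1[of \<mu>1] weight_spmf_nonneg[of \<mu>1] nonneg
    by (simp add: \<delta>'_def mult_left_le)
  finally have L: "(\<integral>a. F' a \<partial>measure_spmf \<mu>1) \<le> (\<integral>a. F1 a \<partial>measure_spmf \<mu>1) + (\<integral>a. F2 a \<partial>measure_spmf \<mu>1) + \<delta>'" .
  have g1: "(\<integral>b. G1 b \<partial>measure_spmf \<mu>2) \<le> exp \<epsilon>1' * (\<integral>b. H1 b \<partial>measure_spmf \<mu>2)"
  proof -
    have "(\<integral>b. G1 b \<partial>measure_spmf \<mu>2) \<le> (\<integral>b. exp \<epsilon>1' * H1 b \<partial>measure_spmf \<mu>2)"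
      by (rule integral_mono[OF iG1 integrable_mult_right[OF iH1]]) (auto simp: G1_def H1_def)
    then show ?thesis by simp
  qed
  have g2: "(\<integral>b. G2 b \<partial>measure_spmf \<mu>2) \<le> exp \<epsilon>2' * (\<integral>b. H2 b \<partial>measure_spmf \<mu>2)"
  proof -
    have "(\<integral>b. G2 b \<partial>measure_spmf \<mu>2) \<le> (\<integral>b. exp \<epsilon>2' * H2 b \<partial>measure_spmf \<mu>2)"
      by (rule integral_mono[OF iG2 integrable_mult_right[OF iH2]]) (auto simp: G2_def H2_def)
    then show ?thesis by simp
  qed
  have h1: "0 \<le> (\<integral>b. H1 b \<partial>measure_spmf \<mu>2)" using H101 by (simp add: integral_nonneg)
  have h2: "0 \<le> (\<integral>b. H2 b \<partial>measure_spmf \<mu>2)" using H201 by (simp add: integral_nonneg)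
  have hsum: "(\<integral>b. H1 b \<partial>measure_spmf \<mu>2) + (\<integral>b. H2 b \<partial>measure_spmf \<mu>2) = (\<integral>b. G' b \<partial>measure_spmf \<mu>2)"
  proof -
    have "(\<integral>b. H1 b \<partial>measure_spmf \<mu>2) + (\<integral>b. H2 b \<partial>measure_spmf \<mu>2) = (\<integral>b. H1 b + H2 b \<partial>measure_spmf \<mu>2)"
      using iH1 iH2 by simp
    also have "(\<lambda>b. H1 b + H2 b) = G'" by (auto simp: H1_def H2_def)
    finally show ?thesis .
  qed
  have e1: "exp \<epsilon>1 * (\<integral>b. G1 b \<partial>measure_spmf \<mu>2) \<le> exp \<epsilon> * (\<integral>b. H1 b \<partial>measure_spmf \<mu>2)"
  proof -
    have "exp \<epsilon>1 * (\<integral>b. G1 b \<partial>measure_spmf \<mu>2) \<le> exp \<epsilon>1 * (exp \<epsilon>1' * (\<integral>b. H1 b \<partial>measure_spmf \<mu>2))"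
      using g1 by simp
    also have "\<dots> = exp (\<epsilon>1 + \<epsilon>1') * (\<integral>b. H1 b \<partial>measure_spmf \<mu>2)" by (simp add: exp_add)
    also have "\<dots> \<le> exp \<epsilon> * (\<integral>b. H1 b \<partial>measure_spmf \<mu>2)"
      using h1 by (intro mult_right_mono) (auto simp: \<epsilon>_def)
    finally show ?thesis .
  qed
  have e2: "exp \<epsilon>2 * (\<integral>b. G2 b \<partial>measure_spmf \<mu>2) \<le> exp \<epsilon> * (\<integral>b. H2 b \<partial>measure_spmf \<mu>2)"
  proof -
    have "exp \<epsilon>2 * (\<integral>b. G2 b \<partial>measure_spmf \<mu>2) \<le> exp \<epsilon>2 * (exp \<epsilon>2' * (\<integral>b. H2 b \<partial>measure_spmf \<mu>2))"
      using g2 by simp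
    also have "\<dots> = exp (\<epsilon>2 + \<epsilon>2') * (\<integral>b. H2 b \<partial>measure_spmf \<mu>2)" by (simp add: exp_add)
    also have "\<dots> \<le> exp \<epsilon> * (\<integral>b. H2 b \<partial>measure_spmf \<mu>2)"
      using h2 by (intro mult_right_mono) (auto simp: \<epsilon>_def)
    finally show ?thesis .
  qed
  have "(\<integral>a. F' a \<partial>measure_spmf \<mu>1) \<le> exp \<epsilon> * ((\<integral>b. H1 b \<partial>measure_spmf \<mu>2) + (\<integral>b. H2 b \<partial>measure_spmf \<mu>2)) + (\<delta>1 + \<delta>2 + \<delta>')"
    using L c1 c2 e1 e2 by (simp add: distrib_left)
  then show "expect (bind_spmf \<mu>1 f) F
       \<le> exp (max (\<epsilon>1 + \<epsilon>1') (\<epsilon>2 + \<epsilon>2')) * expect (bind_spmf \<mu>2 g) G + (\<delta>1 + \<delta>2 + max \<delta>1' \<delta>2')"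
    unfolding lhs rhs hsum \<epsilon>_def \<delta>'_def .
qed

end
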